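(* Let $x_k\in\mathbb{R}^n_{>0}$ satisfy $\mathbf 1^Tx_k\le(1+\epsilon)\mathrm{OPT}$. Then for every $t\in\{0,\dots,w-1\}$ and every $u\in\mathbb{R}^n_{\ge0}$, $$\langle\alpha\,\xi^{(t)}_k,\ x_k-u\rangle\le \alpha^2\,\mathrm{OPT}+V_{x_k}(u)-V_{x^{(t)}_{k+1}}(u).$$
   Context: Standing setup: $A\in\mathbb{R}^{m\times n}_{\ge 0}$ with no zero column; packing LP $\max\{\mathbf 1^Tx:x\ge0,Ax\le\mathbf 1\}$ with optimal value $\mathrm{OPT}$; $\epsilon\in(0,1/2]$; natural $\log$ unless $\log_2$. $\mu=\frac{\epsilon}{4\log(nm/\epsilon)}$, $p_j(x)=\exp\big(\frac{1}{\mu}((Ax)_j-1)\big)$, $f_\mu(x)=-\mathbf 1^Tx+\mu\sum_j p_j(x)$, $\nabla_i f_\mu(x)=-1+\sum_jA_{ji}p_j(x)$, $\alpha=\mu/20$, $w=\lceil\log_2(1/\epsilon)\rceil$. With $g_i=\nabla_i f_\mu(x_k)$: $\xi_k[i]=0$ if $|g_i|\le\epsilon$, $\xi_k[i]=g_i$ if $\epsilon<|g_i|\le1$, $\xi_k[i]=1$ if $g_i>1$; $\xi^{(t)}_k[i]=\xi_k[i]$ if $\epsilon2^t<|\xi_k[i]|\le\epsilon2^{t+1}$ and $0$ otherwise; $x^{(t)}_{k+1}[i]=x_k[i]\exp(-\alpha\xi^{(t)}_k[i])$. Bregman divergence: $V_x(y)=\sum_{i\in[n]}\big(y[i]\log\frac{y[i]}{x[i]}+x[i]-y[i]\big)$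 for $x>0$, $y\ge 0$ (with $0\log0=0$). *)

theory Defs
  imports Complex_Main
begin

text \<open>Matrices A in R^(m x n) are functions nat => nat => real, entry A j i for j < m, i < n.
  Vectors in R^n are functions nat => real, only indices i < n matter.\<close>

definition Ax :: "(nat \<Rightarrow> nat \<Rightarrow> real) \<Rightarrow> nat \<Rightarrow> (nat \<Rightarrow> real) \<Rightarrow> nat \<Rightarrow> real" where
  "Ax A n x j = (\<Sum>i<n. A j i * x i)"

definition packing_OPT :: "(nat \<Rightarrow> nat \<Rightarrow> real) \<Rightarrow> nat \<Rightarrow> nat \<Rightarrow> real" where
  "packing_OPT A m n = Sup {(\<Sum>i<n. x i) | x. (\<forall>i<n. 0 \<le> x i) \<and> (\<forall>j<m. Ax A n x j \<le> 1)}"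

definition mu_param :: "real \<Rightarrow> nat \<Rightarrow> nat \<Rightarrow> real" where
  "mu_param \<epsilon> n m = \<epsilon> / (4 * ln (real n * real m / \<epsilon>))"

definition pfun :: "(nat \<Rightarrow> nat \<Rightarrow> real) \<Rightarrow> nat \<Rightarrow> real \<Rightarrow> (nat \<Rightarrow> real) \<Rightarrow> nat \<Rightarrow> real" where
  "pfun A n \<mu> x j = exp ((1 / \<mu>) * (Ax A n x j - 1))"

definition grad_f :: "(nat \<Rightarrow> nat \<Rightarrow> real) \<Rightarrow> nat \<Rightarrow> nat \<Rightarrow> real \<Rightarrow> (nat \<Rightarrow> real) \<Rightarrow> nat \<Rightarrow> real" where
  "grad_f A m n \<mu> x i = -1 + (\<Sum>j<m. A j i * pfun A n \<mu> x j)"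

text \<open>Truncation of a gradient coordinate (the gradient is always at least -1).\<close>
definition xi_trunc :: "real \<Rightarrow> real \<Rightarrow> real" where
  "xi_trunc \<epsilon> g = (if \<bar>g\<bar> \<le> \<epsilon> then 0 else if g > 1 then 1 else g)"

definition xi_k :: "(nat \<Rightarrow> nat \<Rightarrow> real) \<Rightarrow> nat \<Rightarrow> nat \<Rightarrow> real \<Rightarrow> (nat \<Rightarrow> real) \<Rightarrow> nat \<Rightarrow> real" where
  "xi_k A m n \<epsilon> x i = xi_trunc \<epsilon> (grad_f A m n (mu_param \<epsilon> n m) x i)"

definition xi_kt :: "(nat \<Rightarrow> nat \<Rightarrow> real) \<Rightarrow> nat \<Rightarrow> nat \<Rightarrow> real \<Rightarrow> nat \<Rightarrow> (nat \<Rightarrow> real) \<Rightarrow> nat \<Rightarrow> real" where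
  "xi_kt A m n \<epsilon> t x i =
     (let v = xi_k A m n \<epsilon> x i in
      if \<epsilon> * 2 ^ t < \<bar>v\<bar> \<and> \<bar>v\<bar> \<le> \<epsilon> * 2 ^ (t + 1) then v else 0)"

definition alpha_param :: "real \<Rightarrow> nat \<Rightarrow> nat \<Rightarrow> real" where
  "alpha_param \<epsilon> n m = mu_param \<epsilon> n m / 20"

definition x_next :: "(nat \<Rightarrow> nat \<Rightarrow> real) \<Rightarrow> nat \<Rightarrow> nat \<Rightarrow> real \<Rightarrow> nat \<Rightarrow> (nat \<Rightarrow> real) \<Rightarrow> nat \<Rightarrow> real" where
  "x_next A m n \<epsilon> t x i = x i * exp (- alpha_param \<epsilon> n m * xi_kt A m n \<epsilon> t x i)"

definition w_param :: "real \<Rightarrow> int" where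
  "w_param \<epsilon> = \<lceil>log 2 (1 / \<epsilon>)\<rceil>"

text \<open>Bregman divergence; for y i = 0 the term y i * ln(...) is 0, matching 0 log 0 = 0.\<close>
definition bregman :: "nat \<Rightarrow> (nat \<Rightarrow> real) \<Rightarrow> (nat \<Rightarrow> real) \<Rightarrow> real" where
  "bregman n x y = (\<Sum>i<n. y i * ln (y i / x i) + x i - y i)"

end

theory Submission
  imports Defs
begin

lemma exp_quad:
  fixes a :: real assumes A: "\<bar>a\<bar> \<le> 1/4"
  shows "exp (-a) \<le> 1 - a + (2/3) * a^2"
proof -
  obtain s where s: "\<bar>s\<bar> \<le> \<bar>-a\<bar>" and e: "exp (-a) = (\<Sum>m<2. (-a) ^ m / fact m) + (exp s / fact 2) * (-a) ^ 2"
    using Maclaurin_exp_le[of "-a" 2] by blast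
  have s1: "s \<le> \<bar>a\<bar>" using s by simp
  have "exp s \<le> exp \<bar>a\<bar>" using s1 by (rule exp_mono)
  also have "\<dots> \<le> 1 + \<bar>a\<bar> + \<bar>a\<bar>^2" using A by (intro exp_bound) auto
  also have "\<dots> \<le> 4/3"
  proof -
    have "\<bar>a\<bar>^2 \<le> (1/4)^2" by (rule power_mono) (use A in auto)
    hence "\<bar>a\<bar>^2 \<le> 1/16" by (simp add: power2_eq_square)
    thus ?thesis using A by linarith
  qed
  finally have es: "exp s \<le> 4/3" .
  have "exp (-a) = 1 - a + exp s / 2 * a^2" using e by (simp add: numeral_2_eq_2)
  also have "\<dots> \<le> 1 - a + (2/3) * a^2"
  proof -
    have "exp s / 2 \<le> 2/3" using es by simp
    hence "exp s / 2 * a^2 \<le> (2/3) * a^2" by (rule mult_right_mono) simp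
    thus ?thesis by linarith
  qed
  finally show ?thesis .
qed

lemma ln2_ge: "1/40 \<le> ln (2::real)"
proof -
  have "exp (1/40::real) \<le> 1 + 1/40 + (1/40)^2" by (rule exp_bound) auto
  also have "\<dots> \<le> 2" by (simp add: power2_eq_square)
  finally have "exp (1/40::real) \<le> 2" .
  then have "ln (exp (1/40::real)) \<le> ln 2" by (subst ln_le_cancel_iff) auto
  then show ?thesis by simp
qed

theorem lemma3p7:
  fixes A :: "nat \<Rightarrow> nat \<Rightarrow> real" and m n :: nat and \<epsilon> :: real
    and x u :: "nat \<Rightarrow> real" and t :: nat
  assumes "1 \<le> m" and "1 \<le> n"
    and "\<forall>j<m. \<forall>i<n. 0 \<le> A j i"
    and "\<forall>i<n. \<exists>j<m. A j i \<noteq> 0"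
    and "0 < \<epsilon>" and "\<epsilon> \<le> 1/2"
    and "\<forall>i<n. 0 < x i"
    and "(\<Sum>i<n. x i) \<le> (1 + \<epsilon>) * packing_OPT A m n"
    and "int t < w_param \<epsilon>"
    and "\<forall>i<n. 0 \<le> u i"
  shows "(\<Sum>i<n. alpha_param \<epsilon> n m * xi_kt A m n \<epsilon> t x i * (x i - u i))
           \<le> (alpha_param \<epsilon> n m)^2 * packing_OPT A m n + bregman n x u
              - bregman n (x_next A m n \<epsilon> t x) u"
proof -
  define \<alpha> where "\<alpha> = alpha_param \<epsilon> n m"
  define OPT where "OPT = packing_OPT A m n"
  define L where "L = ln (real n * real m / \<epsilon>)"
  have "2 \<le> real n * real m / \<epsilon>"
  proof -
    have "1 * 1 \<le> real n * real m" using assms(1,2) by (intro mult_mono) auto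
    hence "1 \<le> real n * real m" by simp
    hence "2 * \<epsilon> \<le> real n * real m" using assms(6) by linarith
    thus ?thesis using assms(5) by (simp add: le_divide_eq)
  qed
  hence "ln 2 \<le> L" unfolding L_def by simp
  hence L: "1/40 \<le> L" using ln2_ge by linarith
  have \<alpha>eq: "\<alpha> = \<epsilon> / (80 * L)" unfolding \<alpha>_def alpha_param_def mu_param_def L_def by simp
  have \<alpha>0: "0 \<le> \<alpha>" using L assms(5) \<alpha>eq by simp
  have "\<epsilon> / (80 * L) \<le> \<epsilon> / 2" using L assms(5) by (intro divide_left_mono) auto
  hence "\<epsilon> / (80 * L) \<le> 1/4" using assms(6) by linarith
  hence \<alpha>1: "\<alpha> \<le> 1/4" using \<alpha>eq by simp
  define \<xi> where "\<xi> i = xi_kt A m n \<epsilon> t x i" for i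
  have gr: "-1 \<le> grad_f A m n \<mu> x i" if "i < n" for \<mu> i
  proof -
    have "0 \<le> (\<Sum>j<m. A j i * pfun A n \<mu> x j)"
      using assms(3) that by (intro sum_nonneg) (simp add: pfun_def)
    thus ?thesis unfolding grad_f_def by simp
  qed
  have xib: "\<bar>\<xi> i\<bar> \<le> 1" if "i < n" for i
  proof -
    have "\<bar>xi_k A m n \<epsilon> x i\<bar> \<le> 1"
      using gr[OF that, of "mu_param \<epsilon> n m"] unfolding xi_k_def xi_trunc_def by auto
    thus ?thesis unfolding \<xi>_def xi_kt_def Let_def by auto
  qed
  have xn: "x_next A m n \<epsilon> t x i = x i * exp (- (\<alpha> * \<xi> i))" for i
    unfolding x_next_def \<alpha>_def \<xi>_def by simp
  have pt: "\<alpha> * \<xi> i * (x i - u i) \<le> (2/3) * \<alpha>^2 * x i +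
      ((u i * ln (u i / x i) + x i - u i) - (u i * ln (u i / x_next A m n \<epsilon> t x i) + x_next A m n \<epsilon> t x i - u i))"
    if i: "i < n" for i
  proof -
    define a where "a = \<alpha> * \<xi> i"
    have xi0: "0 < x i" using assms(7) i by auto
    have ab: "\<bar>a\<bar> \<le> \<alpha>" unfolding a_def using xib[OF i] \<alpha>0
      by (simp add: abs_mult mult_left_le)
    hence ab4: "\<bar>a\<bar> \<le> 1/4" using \<alpha>1 by linarith
    have a2: "a^2 \<le> \<alpha>^2" using ab by (metis abs_ge_zero power2_abs power_mono)
    have lnid: "u i * ln (u i / (x i * exp (-a))) = u i * ln (u i / x i) + a * u i"
    proof (cases "u i = 0")
      case False
      hence "0 < u i" using assms(10) i by auto
      hence e1: "u i / (x i * exp (-a)) = (u i / x i) * exp a" by (simp add: exp_minus field_simps)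
      have p: "0 < u i / x i" using \<open>0 < u i\<close> xi0 by simp
      have "ln (u i / (x i * exp (-a))) = ln (u i / x i) + a"
        unfolding e1 ln_mult_pos[OF p exp_gt_zero] ln_exp ..
      thus ?thesis by (simp add: distrib_left)
    next
      case True
      show ?thesis unfolding True by (simp only: mult_zero_left mult_zero_right add_0_right)
    qed
    have "exp (-a) \<le> 1 - a + (2/3) * a^2" by (rule exp_quad[OF ab4])
    hence "x i * exp (-a) \<le> x i * (1 - a + (2/3) * \<alpha>^2)"
      using a2 xi0 by (intro mult_left_mono) auto
    thus ?thesis unfolding xn a_def[symmetric] lnid by (simp add: algebra_simps)
  qed
  have "(\<Sum>i<n. \<alpha> * \<xi> i * (x i - u i)) \<le> (\<Sum>i<n. (2/3) * \<alpha>^2 * x i +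
      ((u i * ln (u i / x i) + x i - u i) - (u i * ln (u i / x_next A m n \<epsilon> t x i) + x_next A m n \<epsilon> t x i - u i)))"
    by (rule sum_mono) (use pt in auto)
  also have "\<dots> = (2/3) * \<alpha>^2 * (\<Sum>i<n. x i) + bregman n x u - bregman n (x_next A m n \<epsilon> t x) u"
    unfolding bregman_def by (simp add: sum.distrib sum_subtractf sum_distrib_left sum_negf)
  also have "(2/3) * \<alpha>^2 * (\<Sum>i<n. x i) \<le> \<alpha>^2 * OPT"
  proof -
    have ne: "{..<n} \<noteq> {}" using assms(2) by (simp add: lessThan_empty_iff)
    have "0 < (\<Sum>i<n. x i)" using assms(7) ne by (intro sum_pos) auto
    have O: "0 < OPT"
    proof (rule ccontr)
      assume "\<not> 0 < OPT"
      hence "(1+\<epsilon>) * OPT \<le> 0" using assms(5) by (intro mult_nonneg_nonpos) auto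
      thus False using \<open>0 < (\<Sum>i<n. x i)\<close> assms(8) unfolding OPT_def by linarith
    qed
    have "(2/3) * (\<Sum>i<n. x i) \<le> (2/3) * ((1+\<epsilon>) * OPT)" using assms(8) OPT_def by simp
    also have "\<dots> = ((2/3)*(1+\<epsilon>)) * OPT" by simp
    also have "\<dots> \<le> 1 * OPT" using O assms(6) by (intro mult_right_mono) auto
    also have "\<dots> = OPT" by simp
    finally show ?thesis by (metis mult.assoc mult.commute mult_left_mono zero_le_power2)
  qed
  finally show ?thesis unfolding \<alpha>_def \<xi>_def OPT_def by simp
qed

end
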